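(* Let $n\ge 1$, let $\mathcal{A},\mathcal{I}\subseteq\{1,\dots,n\}$, and let $H:\mathbb{R}^n_+\to[0,1]$ be given by $$H(\mathbf{y})=\frac{A(\mathbf{y})}{A(\mathbf{y})+B(\mathbf{y})},\qquad A(\mathbf{y})=\Big(\sum_{i\in\mathcal{A}} w_i y_i^{n_i}\Big)^m,\qquad B(\mathbf{y})=K^m\Big(1+\sum_{j\in\mathcal{I}}\Big(\frac{y_j}{K_j}\Big)^{n_j}\Big)^m,$$ where $w_i>0$, $K>0$, $K_j>0$ are constants. Assume that all Hill coefficients satisfy $n_i\ge 1$ and that $m\ge 1$. Then the first derivatives of $H$ are uniformly bounded on $\mathbb{R}^n_+$: there exists $C>0$ such that $$\Big|\frac{\partial H}{\partial y_k}(\mathbf{y})\Big|\le C\qquad\text{for all }k\in\{1,\dots,n\}\text{ and all }\mathbf{y}\in\mathbb{R}^n_+.$$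
   Context: $\mathbb{R}^n_+=[0,\infty)^n$. $\mathcal{A}$ is the set of activator indices and $\mathcal{I}$ the set of inhibitor indices; $n_i$ ($i\in\mathcal{A}\cup\mathcal{I}$) are the Hill coefficients, $m$ is an overall cooperativity coefficient, $w_i$ are weights, $K$ is the half-maximal activation constant and $K_j$ are inhibition constants. Derivatives at boundary points of $\mathbb{R}^n_+$ are understood as one-sided derivatives. *)

theory Defs
  imports "HOL-Analysis.Analysis"
begin

text \<open>Points of R^n_+ are represented as functions y :: nat => real, only the
coordinates 1..n matter; y is in R^n_+ iff y i >= 0 for all i in {1..n}.
Hill coefficients hc i and the cooperativity m are reals >= 1; powers with real
exponent are powr (note 0 powr a = 0, which is the correct value for a >= 1).\<close>

definition nonneg_orthant :: "nat \<Rightarrow> (nat \<Rightarrow> real) set" where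
  "nonneg_orthant n = {y. \<forall>i\<in>{1..n}. 0 \<le> y i}"

definition hill_A :: "nat set \<Rightarrow> (nat \<Rightarrow> real) \<Rightarrow> (nat \<Rightarrow> real) \<Rightarrow> real \<Rightarrow> (nat \<Rightarrow> real) \<Rightarrow> real" where
  "hill_A Act w hc m y = (\<Sum>i\<in>Act. w i * y i powr hc i) powr m"

definition hill_B :: "nat set \<Rightarrow> real \<Rightarrow> (nat \<Rightarrow> real) \<Rightarrow> (nat \<Rightarrow> real) \<Rightarrow> real \<Rightarrow> (nat \<Rightarrow> real) \<Rightarrow> real" where
  "hill_B Inh K Kj hc m y = K powr m * (1 + (\<Sum>j\<in>Inh. (y j / Kj j) powr hc j)) powr m"

definition hill_H :: "nat set \<Rightarrow> nat set \<Rightarrow> (nat \<Rightarrow> real) \<Rightarrow> real \<Rightarrow> (nat \<Rightarrow> real) \<Rightarrow> (nat \<Rightarrow> real) \<Rightarrow> real \<Rightarrow> (nat \<Rightarrow> real) \<Rightarrow> real" where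
  "hill_H Act Inh w K Kj hc m y =
     hill_A Act w hc m y / (hill_A Act w hc m y + hill_B Inh K Kj hc m y)"

definition has_partial_deriv :: "((nat \<Rightarrow> real) \<Rightarrow> real) \<Rightarrow> nat \<Rightarrow> real \<Rightarrow> (nat \<Rightarrow> real) \<Rightarrow> bool" where
  "has_partial_deriv f k D y \<longleftrightarrow>
     ((\<lambda>t. f (y(k := t))) has_real_derivative D) (at (y k) within {0..})"

end

theory Submission
  imports Defs
begin


definition dpow :: "real \<Rightarrow> real \<Rightarrow> real" where
  "dpow p x = (if p = 1 then 1 else p * x powr (p - 1))"

lemma pow_deriv0:
  assumes p: "p \<ge> 1" and x: "x \<ge> 0"
  shows "((\<lambda>x. x powr p) has_real_derivative dpow p x) (at x within {0..})"
proof (cases "x > 0")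
  case True
  have "((\<lambda>x. x powr p) has_real_derivative p * x powr (p - 1)) (at x within {0..})"
    using has_real_derivative_powr[OF True] by (rule has_field_derivative_at_within)
  moreover have "p * x powr (p - 1) = dpow p x" using True by (simp add: dpow_def)
  ultimately show ?thesis by simp
next
  case False
  hence x0: "x = 0" using x by simp
  show ?thesis
  proof (cases "p = 1")
    case True
    have "((\<lambda>x. x) has_real_derivative 1) (at 0 within {0..})" by (rule DERIV_ident)
    then have "((\<lambda>x. x powr p) has_real_derivative 1) (at 0 within {0..})"
      by (rule has_field_derivative_transform_within[where d=1]) (auto simp: True)
    then show ?thesis using x0 True by (simp add: dpow_def)
  next
    case False
    hence p1: "p > 1" using p by simp
    have "((\<lambda>y. y powr (p - 1)) \<longlongrightarrow> 0) (at 0 within {0..})"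
      by (rule tendsto_zero_powrI) (auto intro!: tendsto_ident_at simp: p1 eventually_at_filter)
    moreover have "\<forall>\<^sub>F y in at 0 within {0..}. y powr (p - 1) = (y powr p - 0 powr p) / (y - 0)"
      unfolding eventually_at_filter
      by (auto simp: powr_diff)
    ultimately have "((\<lambda>y. (y powr p - 0 powr p) / (y - 0)) \<longlongrightarrow> 0) (at 0 within {0..})"
      by (rule Lim_transform_eventually)
    then show ?thesis using x0 False p1 by (simp add: has_field_derivative_iff dpow_def)
  qed
qed

lemma pow_chain:
  assumes p: "p \<ge> 1" and f: "(f has_real_derivative f') (at t within S)"
    and nn: "\<And>s. s \<in> S \<Longrightarrow> f s \<ge> 0" and t: "f t \<ge> 0"
  shows "((\<lambda>s. f s powr p) has_real_derivative dpow p (f t) * f') (at t within S)"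
proof -
  have "((\<lambda>x. x powr p) has_real_derivative dpow p (f t)) (at (f t) within f ` S)"
    using pow_deriv0[OF p t] by (rule has_field_derivative_subset) (auto intro: nn)
  from DERIV_image_chain[OF this f] show ?thesis by (simp add: o_def)
qed

lemma dpow_nonneg: "p \<ge> 1 \<Longrightarrow> x \<ge> 0 \<Longrightarrow> dpow p x \<ge> 0"
  by (simp add: dpow_def)

lemma dpow_mult: "p \<ge> 1 \<Longrightarrow> x \<ge> 0 \<Longrightarrow> dpow p x * x = p * x powr p"
  by (auto simp: dpow_def powr_diff)

lemma dpow_le: assumes "p \<ge> 1" "x \<ge> 0" shows "dpow p x \<le> p * (1 + x powr p)"
proof (cases "p = 1")
  case True then show ?thesis using assms by (simp add: dpow_def)
next
  case False
  have "x powr (p - 1) \<le> 1 + x powr p"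
  proof (cases "x \<le> 1")
    case True
    then have "x powr (p - 1) \<le> 1" using assms by (simp add: powr_le1)
    then show ?thesis using powr_ge_zero[of x p] by linarith
  next
    case False
    then have "x powr (p - 1) \<le> x powr p" by (intro powr_mono) auto
    then show ?thesis by simp
  qed
  then show ?thesis using False assms by (simp add: dpow_def)
qed

lemma quot_bound:
  fixes Av Bv A' B' :: real
  assumes "Av \<ge> 0" "Bv > 0" "A' \<ge> 0" "B' \<ge> 0"
  shows "\<bar>(A' * (Av + Bv) - Av * (A' + B')) / ((Av + Bv) * (Av + Bv))\<bar> \<le> A' / (Av + Bv) + B' / Bv"
proof -
  have pos: "Av + Bv > 0" using assms by simp
  have "(A' * (Av + Bv) - Av * (A' + B')) = A' * Bv - Av * B'" by (simp add: algebra_simps)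
  then have "\<bar>(A' * (Av + Bv) - Av * (A' + B')) / ((Av + Bv) * (Av + Bv))\<bar> \<le> (A' * Bv + Av * B') / ((Av + Bv) * (Av + Bv))"
    using assms pos by (auto simp: abs_le_iff divide_right_mono)
  also have "\<dots> = A' * Bv / ((Av + Bv) * (Av + Bv)) + Av * B' / ((Av + Bv) * (Av + Bv))"
    by (simp add: add_divide_distrib)
  also have "A' * Bv / ((Av + Bv) * (Av + Bv)) \<le> A' / (Av + Bv)"
    using assms pos by (simp add: divide_simps mult_left_mono)
  also have "Av * B' / ((Av + Bv) * (Av + Bv)) \<le> B' / Bv"
  proof -
    have "Av * Bv \<le> (Av + Bv) * (Av + Bv)" using assms by (simp add: algebra_simps)
    then have "Av * B' * Bv \<le> B' * ((Av + Bv) * (Av + Bv))" using assms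
      by (metis mult.assoc mult.commute mult_left_mono)
    then show ?thesis using assms pos by (simp add: divide_simps)
  qed
  finally show ?thesis by simp
qed


lemma main_bound:
  fixes Act Inh :: "nat set" and w Kj hc y :: "nat \<Rightarrow> real" and K m :: real and k :: nat
  assumes fA: "finite Act" and fI: "finite Inh"
    and w: "\<forall>i\<in>Act. w i > 0" and K: "K > 0" and Kj: "\<forall>j\<in>Inh. Kj j > 0"
    and hc: "\<forall>i\<in>Act \<union> Inh. hc i \<ge> 1" and m: "m \<ge> 1"
    and y: "\<forall>i\<in>Act \<union> Inh. y i \<ge> 0" and yk: "y k \<ge> 0"
  shows "\<exists>D. has_partial_deriv (hill_H Act Inh w K Kj hc m) k D y \<and>
     \<bar>D\<bar> \<le> (if k \<in> Act then hc k * (w k * m * (1 / K powr m + 1) + m) else 0)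
           + (if k \<in> Inh then hc k * m / Kj k else 0)"
proof -
  define t0 where "t0 = y k"
  define a where "a t = (\<Sum>i\<in>Act. w i * (y(k:=t)) i powr hc i)" for t
  define s where "s t = (\<Sum>j\<in>Inh. ((y(k:=t)) j / Kj j) powr hc j)" for t
  define a' where "a' = (if k \<in> Act then w k * dpow (hc k) t0 else 0)"
  define s' where "s' = (if k \<in> Inh then dpow (hc k) (t0 / Kj k) * (1 / Kj k) else 0)"
  have t0: "t0 \<ge> 0" using yk by (simp add: t0_def)
  have a_nn: "a t \<ge> 0" if "t \<ge> 0" for t
    unfolding a_def using w y that by (intro sum_nonneg) (auto intro!: mult_nonneg_nonneg)
  have s_nn: "s t \<ge> 0" if "t \<ge> 0" for t
    unfolding s_def by (intro sum_nonneg) auto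
  have da: "(a has_real_derivative a') (at t0 within {0..})"
  proof -
    have "((\<lambda>t. \<Sum>i\<in>Act. w i * (y(k:=t)) i powr hc i) has_real_derivative
        (\<Sum>i\<in>Act. (if i = k then w i * dpow (hc i) t0 else 0))) (at t0 within {0..})"
    proof (rule DERIV_sum)
      fix i assume i: "i \<in> Act"
      show "((\<lambda>t. w i * (y(k:=t)) i powr hc i) has_real_derivative
          (if i = k then w i * dpow (hc i) t0 else 0)) (at t0 within {0..})"
      proof (cases "i = k")
        case True
        have "((\<lambda>t. w i * t powr hc i) has_real_derivative w i * dpow (hc i) t0) (at t0 within {0..})"
          using hc i t0 by (intro DERIV_cmult pow_deriv0) auto
        then show ?thesis using True by simp
      next
        case False
        then show ?thesis by simp
      qed
    qed
    then show ?thesis unfolding a_def[abs_def] a'_def using fA by simp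
  qed
  have ds: "(s has_real_derivative s') (at t0 within {0..})"
  proof -
    have "((\<lambda>t. \<Sum>j\<in>Inh. ((y(k:=t)) j / Kj j) powr hc j) has_real_derivative
        (\<Sum>j\<in>Inh. (if j = k then dpow (hc j) (t0 / Kj j) * (1 / Kj j) else 0))) (at t0 within {0..})"
    proof (rule DERIV_sum)
      fix j assume j: "j \<in> Inh"
      show "((\<lambda>t. ((y(k:=t)) j / Kj j) powr hc j) has_real_derivative
          (if j = k then dpow (hc j) (t0 / Kj j) * (1 / Kj j) else 0)) (at t0 within {0..})"
      proof (cases "j = k")
        case True
        have d1: "((\<lambda>t. t / Kj j) has_real_derivative 1 / Kj j) (at t0 within {0..})"
          using Kj j by (auto intro!: derivative_eq_intros)
        have "((\<lambda>t. (t / Kj j) powr hc j) has_real_derivative dpow (hc j) (t0 / Kj j) * (1 / Kj j)) (at t0 within {0..})"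
          using hc j t0 Kj by (intro pow_chain[OF _ d1]) auto
        then show ?thesis using True by simp
      next
        case False
        then show ?thesis by simp
      qed
    qed
    then show ?thesis unfolding s_def[abs_def] s'_def using fI by simp
  qed
  define Av where "Av = a t0 powr m"
  define Bv where "Bv = K powr m * (1 + s t0) powr m"
  define A' where "A' = dpow m (a t0) * a'"
  define B' where "B' = K powr m * (dpow m (1 + s t0) * s')"
  have dA: "((\<lambda>t. a t powr m) has_real_derivative A') (at t0 within {0..})"
    unfolding A'_def using m a_nn t0 by (intro pow_chain[OF _ da]) auto
  have d1s: "((\<lambda>t. 1 + s t) has_real_derivative s') (at t0 within {0..})"
    using DERIV_add[OF DERIV_const ds] by simp
  have dB: "((\<lambda>t. K powr m * (1 + s t) powr m) has_real_derivative B') (at t0 within {0..})"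
    unfolding B'_def using m s_nn t0
    by (intro DERIV_cmult pow_chain[OF _ d1s]) (auto intro: add_nonneg_nonneg)
  have Kpm: "K powr m > 0" using K by simp
  have Bv_ge: "Bv \<ge> K powr m"
  proof -
    have "1 \<le> (1 + s t0) powr m" using s_nn[OF t0] m by (intro ge_one_powr_ge_zero) auto
    then show ?thesis unfolding Bv_def using Kpm by (simp add: mult_le_cancel_left1)
  qed
  have Av_nn: "Av \<ge> 0" by (simp add: Av_def)
  have Bv_pos: "Bv > 0" using Bv_ge Kpm by linarith
  have dH: "((\<lambda>t. a t powr m / (a t powr m + K powr m * (1 + s t) powr m)) has_real_derivative
       (A' * (Av + Bv) - Av * (A' + B')) / ((Av + Bv) * (Av + Bv))) (at t0 within {0..})"
    using DERIV_divide[OF dA DERIV_add[OF dA dB]] Av_nn Bv_pos unfolding Av_def Bv_def by simp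
  have a'_nn: "a' \<ge> 0" using w hc t0 by (auto simp: a'_def intro!: mult_nonneg_nonneg dpow_nonneg)
  have s'_nn: "s' \<ge> 0" using Kj hc t0 by (auto simp: s'_def intro!: divide_nonneg_pos dpow_nonneg)
  have A'_nn: "A' \<ge> 0" unfolding A'_def using a'_nn a_nn[OF t0] m by (simp add: dpow_nonneg)
  have B'_nn: "B' \<ge> 0" unfolding B'_def using s'_nn s_nn[OF t0] m Kpm by (simp add: dpow_nonneg)
  define D where "D = (A' * (Av + Bv) - Av * (A' + B')) / ((Av + Bv) * (Av + Bv))"
  have Dle: "\<bar>D\<bar> \<le> A' / (Av + Bv) + B' / Bv"
    unfolding D_def by (rule quot_bound[OF Av_nn Bv_pos A'_nn B'_nn])
  have yy: "y(k := t0) = y" by (simp add: t0_def)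
  have b1: "A' / (Av + Bv) \<le> (if k \<in> Act then hc k * (w k * m * (1 / K powr m + 1) + m) else 0)"
  proof (cases "k \<in> Act")
    case False then show ?thesis by (simp add: A'_def a'_def)
  next
    case True
    have hk: "hc k \<ge> 1" and wk: "w k > 0" using hc w True by auto
    have tm: "w k * t0 powr hc k \<le> a t0"
    proof -
      have "\<And>x. x \<in> Act - {k} \<Longrightarrow> 0 \<le> w x * y x powr hc x"
        using w by (simp add: less_imp_le)
      from member_le_sum[OF True this fA] show ?thesis unfolding a_def yy t0_def by simp
    qed
    have "a' \<le> w k * (hc k * (1 + t0 powr hc k))"
      using True dpow_le[OF hk t0] wk by (simp add: a'_def)
    also have "\<dots> = hc k * (w k + w k * t0 powr hc k)" by (simp add: algebra_simps)
    also have "\<dots> \<le> hc k * (w k + a t0)" using tm hk by simp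
    finally have a'le: "a' \<le> hc k * (w k + a t0)" .
    have dm: "dpow m (a t0) \<ge> 0" using m a_nn[OF t0] by (simp add: dpow_nonneg)
    have "A' \<le> dpow m (a t0) * (hc k * (w k + a t0))"
      unfolding A'_def using a'le dm by (rule mult_left_mono)
    also have "\<dots> = hc k * (w k * dpow m (a t0) + dpow m (a t0) * a t0)" by (simp add: algebra_simps)
    also have "\<dots> = hc k * (w k * dpow m (a t0) + m * Av)"
      using dpow_mult[OF m a_nn[OF t0]] by (simp add: Av_def)
    also have "\<dots> \<le> hc k * (w k * (m * (1 + Av)) + m * Av)"
      using dpow_le[OF m a_nn[OF t0]] hk wk by (simp add: Av_def)
    finally have A'le: "A' \<le> hc k * (w k * (m * (1 + Av)) + m * Av)" .
    have "1 + Av \<le> (1 / K powr m + 1) * (Av + Bv)"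
    proof -
      have "1 \<le> Bv / K powr m" using Bv_ge Kpm by simp
      also have "\<dots> \<le> (Av + Bv) / K powr m" using Av_nn Kpm by (simp add: divide_right_mono)
      finally have "1 + Av \<le> (Av + Bv) / K powr m + (Av + Bv)" using Bv_pos by simp
      then show ?thesis by (simp add: algebra_simps)
    qed
    then have "w k * (m * (1 + Av)) \<le> w k * m * (1 / K powr m + 1) * (Av + Bv)"
      using wk m by (simp add: mult.assoc mult_left_mono)
    moreover have "m * Av \<le> m * (Av + Bv)" using m Bv_pos by simp
    ultimately have "w k * (m * (1 + Av)) + m * Av \<le> w k * m * (1 / K powr m + 1) * (Av + Bv) + m * (Av + Bv)"
      by linarith
    then have "hc k * (w k * (m * (1 + Av)) + m * Av) \<le> hc k * (w k * m * (1 / K powr m + 1) * (Av + Bv) + m * (Av + Bv))"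
      using hk by (intro mult_left_mono) auto
    also have "\<dots> = hc k * (w k * m * (1 / K powr m + 1) + m) * (Av + Bv)"
      by (simp add: algebra_simps)
    finally have "hc k * (w k * (m * (1 + Av)) + m * Av) \<le> hc k * (w k * m * (1 / K powr m + 1) + m) * (Av + Bv)" .
    with A'le have "A' \<le> hc k * (w k * m * (1 / K powr m + 1) + m) * (Av + Bv)" by linarith
    then show ?thesis using True Av_nn Bv_pos by (simp add: divide_simps)
  qed
  have b2: "B' / Bv \<le> (if k \<in> Inh then hc k * m / Kj k else 0)"
  proof (cases "k \<in> Inh")
    case False then show ?thesis by (simp add: B'_def s'_def)
  next
    case True
    have hk: "hc k \<ge> 1" and kk: "Kj k > 0" using hc Kj True by auto
    have u0: "t0 / Kj k \<ge> 0" using t0 kk by simp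
    have tm: "(t0 / Kj k) powr hc k \<le> s t0"
      unfolding s_def yy using member_le_sum[OF True, of "\<lambda>j. (y j / Kj j) powr hc j"] fI
      by (auto simp: t0_def)
    have "s' \<le> hc k * (1 + (t0 / Kj k) powr hc k) * (1 / Kj k)"
      using True dpow_le[OF hk u0] kk by (simp add: s'_def divide_right_mono)
    also have "\<dots> \<le> hc k * (1 + s t0) * (1 / Kj k)"
      using tm hk kk by (simp add: divide_right_mono)
    finally have s'le: "s' \<le> hc k * (1 + s t0) * (1 / Kj k)" .
    have dm: "dpow m (1 + s t0) \<ge> 0" using m s_nn[OF t0] by (simp add: dpow_nonneg)
    have "B' \<le> K powr m * (dpow m (1 + s t0) * (hc k * (1 + s t0) * (1 / Kj k)))"
      unfolding B'_def using s'le dm Kpm by (intro mult_left_mono) auto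
    also have "\<dots> = K powr m * (dpow m (1 + s t0) * (1 + s t0)) * (hc k / Kj k)"
      by (simp add: algebra_simps)
    also have "\<dots> = Bv * (hc k * m / Kj k)"
      using dpow_mult[OF m, of "1 + s t0"] s_nn[OF t0] by (simp add: Bv_def algebra_simps)
    finally show ?thesis using True Bv_pos by (simp add: divide_simps mult.commute)
  qed
  have "has_partial_deriv (hill_H Act Inh w K Kj hc m) k D y"
    unfolding has_partial_deriv_def hill_H_def hill_A_def hill_B_def
    using dH unfolding D_def t0_def a_def s_def .
  then show ?thesis using Dle b1 b2 by (intro exI[of _ D]) auto
qed

theorem proposition1:
  fixes n :: nat and Act Inh :: "nat set" and w Kj hc :: "nat \<Rightarrow> real" and K m :: real
  assumes "n \<ge> 1"
    and "Act \<subseteq> {1..n}" and "Inh \<subseteq> {1..n}"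
    and "\<forall>i\<in>Act. w i > 0"
    and "K > 0"
    and "\<forall>j\<in>Inh. Kj j > 0"
    and "\<forall>i\<in>Act \<union> Inh. hc i \<ge> 1"
    and "m \<ge> 1"
  shows "\<exists>C>0. \<forall>k\<in>{1..n}. \<forall>y\<in>nonneg_orthant n.
           \<exists>D. has_partial_deriv (hill_H Act Inh w K Kj hc m) k D y \<and> \<bar>D\<bar> \<le> C"
proof -
  define Cf where "Cf k = (if k \<in> Act then hc k * (w k * m * (1 / K powr m + 1) + m) else 0)
           + (if k \<in> Inh then hc k * m / Kj k else 0)" for k
  have Cf_nn: "Cf k \<ge> 0" for k
  proof -
    have "hc k \<ge> 0" if h: "k \<in> Act \<union> Inh"
    proof -
      have "1 \<le> hc k" using assms(7) h by blast
      then show ?thesis by linarith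
    qed
    then show ?thesis
      using assms(4-8) by (auto simp: Cf_def intro!: add_nonneg_nonneg mult_nonneg_nonneg divide_nonneg_pos)
  qed
  define C where "C = 1 + (\<Sum>k\<in>{1..n}. Cf k)"
  have fA: "finite Act" and fI: "finite Inh" using assms(2,3) finite_subset by blast+
  have "C > 0" unfolding C_def using Cf_nn by (simp add: add_pos_nonneg sum_nonneg)
  moreover have "\<exists>D. has_partial_deriv (hill_H Act Inh w K Kj hc m) k D y \<and> \<bar>D\<bar> \<le> C"
    if k: "k \<in> {1..n}" and y: "y \<in> nonneg_orthant n" for k y
  proof -
    have yn: "\<forall>i\<in>Act \<union> Inh. y i \<ge> 0" "y k \<ge> 0"
      using y k assms(2,3) by (auto simp: nonneg_orthant_def)
    obtain D where D: "has_partial_deriv (hill_H Act Inh w K Kj hc m) k D y" "\<bar>D\<bar> \<le> Cf k"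
      using main_bound[OF fA fI assms(4-8) yn] unfolding Cf_def by blast
    have "Cf k \<le> (\<Sum>k\<in>{1..n}. Cf k)" using k Cf_nn by (intro member_le_sum) auto
    then show ?thesis using D unfolding C_def by (intro exI[of _ D]) auto
  qed
  ultimately show ?thesis by blast
qed

end
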